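(* Let $\Gamma$ be a $\Bbbk$-algebra, $\sim$ an equivalence relation on $\mathrm{cfs}(\Gamma)$, and $B\in\mathrm{cfs}(\Gamma)/{\sim}$. Then the Jacobson radical of $\hat\Gamma_B$ is $\mathrm{Rad}(\hat\Gamma_B)=\bigcap_{\mathfrak m\in B}\ker(\pi_{\mathfrak m})$.
   Context: $\mathrm{cfs}(\Gamma)$: maximal two-sided ideals $\mathfrak m$ with $\dim\Gamma/\mathfrak m<\infty$. For a class $B$, $\mathcal W(B)=\{\mathfrak m_1\cdots\mathfrak m_k:k\ge0,\mathfrak m_i\in B\}$, directed by reverse inclusion. $\hat\Gamma_B=\varprojlim_{\mathfrak m\in\mathcal W(B)}\Gamma/\mathfrak m$, and $\pi_{\mathfrak m}:\hat\Gamma_B\to\Gamma/\mathfrak m$ is the canonical projection. *)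

theory Defs
  imports Main "HOL.Vector_Spaces" "HOL-Algebra.Ring"
begin

definition k_algebra :: "('k::field \<Rightarrow> 'a::ring_1 \<Rightarrow> 'a) \<Rightarrow> bool" where
  "k_algebra scale \<longleftrightarrow> Vector_Spaces.vector_space scale \<and>
     (\<forall>c x y. scale c (x * y) = scale c x * y \<and> scale c (x * y) = x * scale c y)"

definition two_sided_ideal :: "'a::ring_1 set \<Rightarrow> bool" where
  "two_sided_ideal I \<longleftrightarrow> 0 \<in> I \<and> (\<forall>x\<in>I. \<forall>y\<in>I. x + y \<in> I) \<and> (\<forall>x\<in>I. - x \<in> I)
     \<and> (\<forall>x\<in>I. \<forall>a. a * x \<in> I \<and> x * a \<in> I)"

definition maximal_two_sided_ideal :: "'a::ring_1 set \<Rightarrow> bool" where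
  "maximal_two_sided_ideal M \<longleftrightarrow> two_sided_ideal M \<and> M \<noteq> UNIV \<and>
     (\<forall>J. two_sided_ideal J \<and> M \<subseteq> J \<longrightarrow> J = M \<or> J = UNIV)"

text \<open>dim (Gamma / m) finite: Gamma = span S + m for some finite set S.\<close>
definition finite_codim :: "('k::field \<Rightarrow> 'a::ring_1 \<Rightarrow> 'a) \<Rightarrow> 'a set \<Rightarrow> bool" where
  "finite_codim scale M \<longleftrightarrow> (\<exists>S. finite S \<and> (\<forall>x. \<exists>s\<in>Modules.module.span scale S. x - s \<in> M))"

definition cfs :: "('k::field \<Rightarrow> 'a::ring_1 \<Rightarrow> 'a) \<Rightarrow> 'a set set" where
  "cfs scale = {M. maximal_two_sided_ideal M \<and> finite_codim scale M}"

definition ideal_mult :: "'a::ring_1 set \<Rightarrow> 'a set \<Rightarrow> 'a set" where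
  "ideal_mult I J = {z. \<exists>(n::nat) f g. (\<forall>i<n. f i \<in> I \<and> g i \<in> J) \<and> z = (\<Sum>i<n. f i * g i)}"

definition ideal_prod_list :: "'a::ring_1 set list \<Rightarrow> 'a set" where
  "ideal_prod_list ms = foldr ideal_mult ms UNIV"

definition W :: "'a::ring_1 set set \<Rightarrow> 'a set set" where
  "W B = {ideal_prod_list ms | ms. set ms \<subseteq> B}"

text \<open>Elements of Gamma/I are represented as cosets a + I.\<close>
definition coset_of :: "'a::ring_1 set \<Rightarrow> 'a \<Rightarrow> 'a set" where
  "coset_of I a = {x. x - a \<in> I}"

text \<open>An element of the inverse limit is a family (c I) over I in W(B) with c I in Gamma/I,
  compatible with the canonical projections Gamma/I \<rightarrow> Gamma/J for I \<subseteq> J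
  (i.e. J \<le> I in the reverse-inclusion order); the projection sends a+I to a+J, so
  compatibility means c I \<subseteq> c J. Outside W(B) the family is {}.\<close>
definition completion_carrier :: "'a::ring_1 set set \<Rightarrow> ('a set \<Rightarrow> 'a set) set" where
  "completion_carrier B = {c.
     (\<forall>I. I \<in> W B \<longrightarrow> (\<exists>a. c I = coset_of I a)) \<and>
     (\<forall>I. I \<notin> W B \<longrightarrow> c I = {}) \<and>
     (\<forall>I J. I \<in> W B \<longrightarrow> J \<in> W B \<longrightarrow> I \<subseteq> J \<longrightarrow> c I \<subseteq> c J)}"

definition completion :: "'a::ring_1 set set \<Rightarrow> ('a set \<Rightarrow> 'a set) ring" where
  "completion B = \<lparr>carrier = completion_carrier B,
     monoid.mult = (\<lambda>c d I. if I \<in> W B then {z. \<exists>x\<in>c I. \<exists>y\<in>d I. z - x * y \<in> I} else {}),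
     one = (\<lambda>I. if I \<in> W B then coset_of I 1 else {}),
     zero = (\<lambda>I. if I \<in> W B then coset_of I 0 else {}),
     add = (\<lambda>c d I. if I \<in> W B then {z. \<exists>x\<in>c I. \<exists>y\<in>d I. z - (x + y) \<in> I} else {})\<rparr>"

definition proj :: "'a::ring_1 set \<Rightarrow> ('a set \<Rightarrow> 'a set) \<Rightarrow> 'a set" where
  "proj M c = c M"

definition proj_kernel :: "'a::ring_1 set set \<Rightarrow> 'a set \<Rightarrow> ('a set \<Rightarrow> 'a set) set" where
  "proj_kernel B M = {c \<in> completion_carrier B. proj M c = coset_of M 0}"

definition left_ideal :: "('r, 'm) ring_scheme \<Rightarrow> 'r set \<Rightarrow> bool" where
  "left_ideal R L \<longleftrightarrow> L \<subseteq> carrier R \<and> \<zero>\<^bsub>R\<^esub> \<in> L \<and>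
     (\<forall>x\<in>L. \<forall>y\<in>L. x \<oplus>\<^bsub>R\<^esub> y \<in> L) \<and> (\<forall>x\<in>L. \<ominus>\<^bsub>R\<^esub> x \<in> L) \<and>
     (\<forall>a\<in>carrier R. \<forall>x\<in>L. a \<otimes>\<^bsub>R\<^esub> x \<in> L)"

definition maximal_left_ideal :: "('r, 'm) ring_scheme \<Rightarrow> 'r set \<Rightarrow> bool" where
  "maximal_left_ideal R L \<longleftrightarrow> left_ideal R L \<and> L \<noteq> carrier R \<and>
     (\<forall>J. left_ideal R J \<and> L \<subseteq> J \<longrightarrow> J = L \<or> J = carrier R)"

definition jacobson_radical :: "('r, 'm) ring_scheme \<Rightarrow> 'r set" where
  "jacobson_radical R = carrier R \<inter> \<Inter> {L. maximal_left_ideal R L}"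

end

theory Submission
  imports Defs
begin

lemma ti_UNIV: "two_sided_ideal (UNIV::'a::ring_1 set)"
  by (simp add: two_sided_ideal_def)

lemma ti_diff: "two_sided_ideal I \<Longrightarrow> x \<in> I \<Longrightarrow> y \<in> I \<Longrightarrow> x - y \<in> I"
  unfolding two_sided_ideal_def by (metis diff_conv_add_uminus)

lemma ti_add: "two_sided_ideal I \<Longrightarrow> x \<in> I \<Longrightarrow> y \<in> I \<Longrightarrow> x + y \<in> I"
  unfolding two_sided_ideal_def by blast

lemma ti_neg: "two_sided_ideal I \<Longrightarrow> x \<in> I \<Longrightarrow> - x \<in> I"
  unfolding two_sided_ideal_def by blast

lemma ti_zero: "two_sided_ideal I \<Longrightarrow> 0 \<in> I"
  unfolding two_sided_ideal_def by blast

lemma ti_lmult: "two_sided_ideal I \<Longrightarrow> x \<in> I \<Longrightarrow> a * x \<in> I"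
  unfolding two_sided_ideal_def by blast

lemma ti_rmult: "two_sided_ideal I \<Longrightarrow> x \<in> I \<Longrightarrow> x * a \<in> I"
  unfolding two_sided_ideal_def by blast

lemma ti_sum: "two_sided_ideal I \<Longrightarrow> (\<And>i. i < (n::nat) \<Longrightarrow> f i \<in> I) \<Longrightarrow> (\<Sum>i<n. f i) \<in> I"
  by (induction n) (auto simp: ti_zero ti_add)

lemma sum_concat:
  fixes F :: "nat \<Rightarrow> 'a::comm_monoid_add"
  shows "(\<Sum>i<n1+n2. F i) = (\<Sum>i<n1. F i) + (\<Sum>i<n2. F (n1 + i))"
  by (induction n2) (auto simp: add.assoc)

lemma ideal_mult_prod: "x \<in> I \<Longrightarrow> y \<in> J \<Longrightarrow> x * y \<in> ideal_mult I J"
  unfolding ideal_mult_def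
  by (rule CollectI, rule exI[of _ 1], rule exI[of _ "\<lambda>_. x"], rule exI[of _ "\<lambda>_. y"]) auto

lemma ideal_mult_ti:
  assumes I: "two_sided_ideal I" and J: "two_sided_ideal J"
  shows "two_sided_ideal (ideal_mult I J)"
  unfolding two_sided_ideal_def
proof (intro conjI ballI allI)
  show "0 \<in> ideal_mult I J" unfolding ideal_mult_def by (rule CollectI, rule exI[of _ 0]) simp
next
  fix x y assume "x \<in> ideal_mult I J" "y \<in> ideal_mult I J"
  obtain n1 :: nat and f1 g1 where 1: "\<forall>i<n1. f1 i \<in> I \<and> g1 i \<in> J" "x = (\<Sum>i<n1. f1 i * g1 i)"
    using \<open>x \<in> ideal_mult I J\<close> unfolding ideal_mult_def by blast
  obtain n2 :: nat and f2 g2 where 2: "\<forall>i<n2. f2 i \<in> I \<and> g2 i \<in> J" "y = (\<Sum>i<n2. f2 i * g2 i)"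
    using \<open>y \<in> ideal_mult I J\<close> unfolding ideal_mult_def by blast
  define f where "f i = (if i < n1 then f1 i else f2 (i - n1))" for i
  define g where "g i = (if i < n1 then g1 i else g2 (i - n1))" for i
  have "(\<Sum>i<n1+n2. f i * g i) = x + y"
    unfolding sum_concat 1 2 f_def g_def by simp
  moreover have "\<forall>i<n1+n2. f i \<in> I \<and> g i \<in> J" using 1 2 unfolding f_def g_def by auto
  ultimately show "x + y \<in> ideal_mult I J" unfolding ideal_mult_def
    by (intro CollectI exI[of _ "n1+n2"] exI[of _ f] exI[of _ g]) simp
next
  fix x assume "x \<in> ideal_mult I J"
  then obtain n :: nat and f g where 1: "\<forall>i<n. f i \<in> I \<and> g i \<in> J" "x = (\<Sum>i<n. f i * g i)"
    unfolding ideal_mult_def by blast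
  have "- x = (\<Sum>i<n. (- f i) * g i)" using 1 by (simp add: sum_negf)
  moreover have "\<forall>i<n. - f i \<in> I \<and> g i \<in> J" using 1 I ti_neg by blast
  ultimately show "- x \<in> ideal_mult I J" unfolding ideal_mult_def
    by (intro CollectI exI[of _ n] exI[of _ "\<lambda>i. - f i"] exI[of _ g]) simp
next
  fix x a assume "x \<in> ideal_mult I J"
  then obtain n :: nat and f g where 1: "\<forall>i<n. f i \<in> I \<and> g i \<in> J" "x = (\<Sum>i<n. f i * g i)"
    unfolding ideal_mult_def by blast
  have "a * x = (\<Sum>i<n. (a * f i) * g i)" using 1 by (simp add: sum_distrib_left mult.assoc)
  moreover have "\<forall>i<n. a * f i \<in> I \<and> g i \<in> J" using 1 I ti_lmult by blast
  ultimately show "a * x \<in> ideal_mult I J" unfolding ideal_mult_def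
    by (intro CollectI exI[of _ n] exI[of _ "\<lambda>i. a * f i"] exI[of _ g]) simp
  have "x * a = (\<Sum>i<n. f i * (g i * a))" using 1 by (simp add: sum_distrib_right mult.assoc)
  moreover have "\<forall>i<n. f i \<in> I \<and> g i * a \<in> J" using 1 J ti_rmult by blast
  ultimately show "x * a \<in> ideal_mult I J" unfolding ideal_mult_def
    by (intro CollectI exI[of _ n] exI[of _ f] exI[of _ "\<lambda>i. g i * a"]) simp
qed

lemma ideal_mult_sub1: "two_sided_ideal I \<Longrightarrow> ideal_mult I J \<subseteq> I"
  unfolding ideal_mult_def by (auto intro!: ti_sum ti_rmult)

lemma ideal_mult_sub2: "two_sided_ideal J \<Longrightarrow> ideal_mult I J \<subseteq> J"
  unfolding ideal_mult_def by (auto intro!: ti_sum ti_lmult)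

lemma prod_list_ti: "(\<forall>M\<in>set ms. two_sided_ideal M) \<Longrightarrow> two_sided_ideal (ideal_prod_list ms)"
  unfolding ideal_prod_list_def by (induction ms) (auto simp: ti_UNIV ideal_mult_ti)

lemma prod_list_sub: "(\<forall>M\<in>set ms. two_sided_ideal M) \<Longrightarrow> M \<in> set ms \<Longrightarrow> ideal_prod_list ms \<subseteq> M"
  unfolding ideal_prod_list_def
proof (induction ms)
  case (Cons a ms)
  have "two_sided_ideal (foldr ideal_mult ms UNIV)"
    using Cons.prems prod_list_ti[of ms] unfolding ideal_prod_list_def by auto
  then show ?case using Cons ideal_mult_sub1[of a] ideal_mult_sub2 by fastforce
qed simp

lemma prod_list_power:
  assumes "\<forall>M\<in>set ms. two_sided_ideal M" "\<forall>M\<in>set ms. x \<in> M"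
  shows "x ^ length ms \<in> ideal_prod_list ms"
  using assms unfolding ideal_prod_list_def
proof (induction ms)
  case Nil then show ?case by simp
next
  case (Cons a ms)
  have IH: "x ^ length ms \<in> foldr ideal_mult ms UNIV" using Cons by auto
  have "x * x ^ length ms \<in> ideal_mult a (foldr ideal_mult ms UNIV)"
    by (rule ideal_mult_prod) (use Cons.prems IH in auto)
  then show ?case by simp
qed

lemma W_ti: "(\<forall>M\<in>B. two_sided_ideal M) \<Longrightarrow> I \<in> W B \<Longrightarrow> two_sided_ideal I"
  unfolding W_def using prod_list_ti by blast

lemma W_single: "two_sided_ideal M \<Longrightarrow> M \<in> B \<Longrightarrow> M \<in> W B"
proof -
  assume M: "two_sided_ideal M" "M \<in> B"
  have "ideal_mult M UNIV = M"
  proof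
    show "ideal_mult M UNIV \<subseteq> M" using ideal_mult_sub1 M by blast
    show "M \<subseteq> ideal_mult M UNIV"
    proof
      fix x assume "x \<in> M"
      then show "x \<in> ideal_mult M UNIV" unfolding ideal_mult_def
        by (intro CollectI exI[of _ 1] exI[of _ "\<lambda>_. x"] exI[of _ "\<lambda>_. 1"]) auto
    qed
  qed
  then have "ideal_prod_list [M] = M" unfolding ideal_prod_list_def by simp
  then show ?thesis unfolding W_def using M by force
qed

lemma coset_eq_iff: "two_sided_ideal I \<Longrightarrow> coset_of I a = coset_of I b \<longleftrightarrow> a - b \<in> I"
proof
  assume I: "two_sided_ideal I"
  { assume "coset_of I a = coset_of I b"
    moreover have "a \<in> coset_of I a" using I by (simp add: coset_of_def ti_zero)
    ultimately show "a - b \<in> I" by (simp add: coset_of_def) }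
  { assume ab: "a - b \<in> I"
    show "coset_of I a = coset_of I b"
    proof (auto simp: coset_of_def)
      fix x assume "x - a \<in> I"
      then have "(x - a) + (a - b) \<in> I" using ab I ti_add by blast
      then show "x - b \<in> I" by (simp add: algebra_simps)
    next
      fix x assume "x - b \<in> I"
      then have "(x - b) - (a - b) \<in> I" using ab I ti_diff by blast
      then show "x - a \<in> I" by (simp add: algebra_simps)
    qed }
qed

lemma geom_r: "(\<Sum>i<n. (x::'a::ring_1) ^ i) * (1 - x) = 1 - x ^ n"
proof (induction n)
  case (Suc n)
  have "(\<Sum>i<Suc n. x ^ i) * (1 - x) = (\<Sum>i<n. x ^ i) * (1 - x) + (x ^ n - x ^ n * x)"
    by (simp add: algebra_simps)
  also have "\<dots> = 1 - x ^ Suc n" using Suc by (simp add: power_Suc2 power_commutes)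
  finally show ?case .
qed simp
lemma geom_l: "(1 - x) * (\<Sum>i<n. (x::'a::ring_1) ^ i) = 1 - x ^ n"
proof (induction n)
  case (Suc n)
  have "(1 - x) * (\<Sum>i<Suc n. x ^ i) = (1 - x) * (\<Sum>i<n. x ^ i) + (x ^ n - x * x ^ n)"
    by (simp add: algebra_simps)
  also have "\<dots> = 1 - x ^ Suc n" using Suc by simp
  finally show ?case .
qed simp

locale compl =
  fixes B :: "'a::ring_1 set set"
  assumes hB: "\<forall>M\<in>B. two_sided_ideal M"
begin

definition mk :: "('a set \<Rightarrow> 'a) \<Rightarrow> ('a set \<Rightarrow> 'a set)" where
  "mk f = (\<lambda>I. if I \<in> W B then coset_of I (f I) else {})"

definition compat :: "('a set \<Rightarrow> 'a) \<Rightarrow> bool" where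
  "compat f \<longleftrightarrow> (\<forall>I J. I \<in> W B \<longrightarrow> J \<in> W B \<longrightarrow> I \<subseteq> J \<longrightarrow> f I - f J \<in> J)"

lemma WI: "I \<in> W B \<Longrightarrow> two_sided_ideal I"
  using W_ti hB by blast

lemma mk_in: "compat f \<Longrightarrow> mk f \<in> carrier (completion B)"
proof -
  assume c: "compat f"
  have "mk f I \<subseteq> mk f J" if "I \<in> W B" "J \<in> W B" "I \<subseteq> J" for I J
  proof
    fix x assume "x \<in> mk f I"
    then have "x - f I \<in> J" using that by (auto simp: mk_def coset_of_def)
    moreover have "f I - f J \<in> J" using c that by (auto simp: compat_def)
    ultimately have "(x - f I) + (f I - f J) \<in> J" using ti_add WI that by blast
    then show "x \<in> mk f J" using that by (simp add: mk_def coset_of_def)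
  qed
  then show ?thesis by (auto simp: completion_def completion_carrier_def mk_def)
qed

lemma carrier_iff: "c \<in> carrier (completion B) \<longleftrightarrow> (\<exists>f. c = mk f \<and> compat f)"
proof
  assume c: "c \<in> carrier (completion B)"
  define f where "f I = (SOME a. c I = coset_of I a)" for I
  have cf: "c I = coset_of I (f I)" if "I \<in> W B" for I
  proof -
    have "\<exists>a. c I = coset_of I a"
      using c that unfolding completion_def completion_carrier_def by auto
    from someI_ex[OF this] show ?thesis unfolding f_def .
  qed
  have "c = mk f"
  proof
    fix I show "c I = mk f I"
      using c cf unfolding mk_def completion_def completion_carrier_def by auto
  qed
  moreover have "compat f" unfolding compat_def
  proof (intro allI impI)
    fix I J assume IJ: "I \<in> W B" "J \<in> W B" "I \<subseteq> J"
    have "f I \<in> c I" using cf[OF IJ(1)] WI[OF IJ(1)] by (simp add: coset_of_def ti_zero)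
    also have "c I \<subseteq> c J" using c IJ unfolding completion_def completion_carrier_def by auto
    finally show "f I - f J \<in> J" using cf[OF IJ(2)] by (simp add: coset_of_def)
  qed
  ultimately show "\<exists>f. c = mk f \<and> compat f" by blast
next
  assume "\<exists>f. c = mk f \<and> compat f"
  then show "c \<in> carrier (completion B)" using mk_in by blast
qed

lemma mk_eq_iff: "mk f = mk g \<longleftrightarrow> (\<forall>I\<in>W B. f I - g I \<in> I)"
proof
  assume "mk f = mk g"
  then show "\<forall>I\<in>W B. f I - g I \<in> I"
    unfolding mk_def by (metis WI coset_eq_iff)
next
  assume "\<forall>I\<in>W B. f I - g I \<in> I"
  then show "mk f = mk g" unfolding mk_def by (intro ext) (auto simp: coset_eq_iff WI)
qed

lemma mult_mk: "mk f \<otimes>\<^bsub>completion B\<^esub> mk g = mk (\<lambda>I. f I * g I)"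
proof
  fix I
  show "(mk f \<otimes>\<^bsub>completion B\<^esub> mk g) I = mk (\<lambda>I. f I * g I) I"
  proof (cases "I \<in> W B")
    case True
    note T = WI[OF True]
    show ?thesis
    proof (simp add: completion_def mk_def True, intro equalityI subsetI)
      fix z assume "z \<in> {z. \<exists>x\<in>coset_of I (f I). \<exists>y\<in>coset_of I (g I). z - x * y \<in> I}"
      then obtain x y where h: "x - f I \<in> I" "y - g I \<in> I" "z - x * y \<in> I"
        by (auto simp: coset_of_def)
      have "(z - x * y) + ((x - f I) * y + f I * (y - g I)) \<in> I"
        using h T by (intro ti_add ti_rmult ti_lmult) auto
      then show "z \<in> coset_of I (f I * g I)"
        by (simp add: coset_of_def algebra_simps)
    next
      fix z assume "z \<in> coset_of I (f I * g I)"
      then have "z - f I * g I \<in> I" by (simp add: coset_of_def)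
      moreover have "f I \<in> coset_of I (f I)" "g I \<in> coset_of I (g I)" using T by (simp_all add: coset_of_def ti_zero)
      ultimately show "z \<in> {z. \<exists>x\<in>coset_of I (f I). \<exists>y\<in>coset_of I (g I). z - x * y \<in> I}"
        by blast
    qed
  qed (simp add: completion_def mk_def)
qed

lemma add_mk: "mk f \<oplus>\<^bsub>completion B\<^esub> mk g = mk (\<lambda>I. f I + g I)"
proof
  fix I
  show "(mk f \<oplus>\<^bsub>completion B\<^esub> mk g) I = mk (\<lambda>I. f I + g I) I"
  proof (cases "I \<in> W B")
    case True
    note T = WI[OF True]
    show ?thesis
    proof (simp add: completion_def mk_def True, intro equalityI subsetI)
      fix z assume "z \<in> {z. \<exists>x\<in>coset_of I (f I). \<exists>y\<in>coset_of I (g I). z - (x + y) \<in> I}"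
      then obtain x y where h: "x - f I \<in> I" "y - g I \<in> I" "z - (x + y) \<in> I"
        by (auto simp: coset_of_def)
      have "(z - (x + y)) + ((x - f I) + (y - g I)) \<in> I"
        using h T by (intro ti_add) auto
      then show "z \<in> coset_of I (f I + g I)"
        by (simp add: coset_of_def algebra_simps)
    next
      fix z assume "z \<in> coset_of I (f I + g I)"
      then have "z - (f I + g I) \<in> I" by (simp add: coset_of_def)
      moreover have "f I \<in> coset_of I (f I)" "g I \<in> coset_of I (g I)" using T by (simp_all add: coset_of_def ti_zero)
      ultimately show "z \<in> {z. \<exists>x\<in>coset_of I (f I). \<exists>y\<in>coset_of I (g I). z - (x + y) \<in> I}"
        by blast
    qed
  qed (simp add: completion_def mk_def)
qed

lemma one_mk: "\<one>\<^bsub>completion B\<^esub> = mk (\<lambda>_. 1)"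
  by (simp add: completion_def mk_def)

lemma zero_mk: "\<zero>\<^bsub>completion B\<^esub> = mk (\<lambda>_. 0)"
  by (simp add: completion_def mk_def)

lemma compat_const: "compat (\<lambda>_. x)"
  unfolding compat_def by (auto intro: ti_zero[OF WI])

lemma compat_add: "compat f \<Longrightarrow> compat g \<Longrightarrow> compat (\<lambda>I. f I + g I)"
  unfolding compat_def
proof (intro allI impI)
  fix I J assume "\<forall>I J. I \<in> W B \<longrightarrow> J \<in> W B \<longrightarrow> I \<subseteq> J \<longrightarrow> f I - f J \<in> J"
    "\<forall>I J. I \<in> W B \<longrightarrow> J \<in> W B \<longrightarrow> I \<subseteq> J \<longrightarrow> g I - g J \<in> J"
    "I \<in> W B" "J \<in> W B" "I \<subseteq> J"
  then have 1: "f I - f J \<in> J" "g I - g J \<in> J" and J: "two_sided_ideal J" using WI by blast+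
  have "(f I - f J) + (g I - g J) \<in> J" by (rule ti_add[OF J 1])
  then show "f I + g I - (f J + g J) \<in> J" by (simp add: algebra_simps)
qed

lemma compat_neg: "compat f \<Longrightarrow> compat (\<lambda>I. - f I)"
  unfolding compat_def
proof (intro allI impI)
  fix I J assume "\<forall>I J. I \<in> W B \<longrightarrow> J \<in> W B \<longrightarrow> I \<subseteq> J \<longrightarrow> f I - f J \<in> J"
    "I \<in> W B" "J \<in> W B" "I \<subseteq> J"
  then have 1: "f I - f J \<in> J" and J: "two_sided_ideal J" using WI by blast+
  have "- (f I - f J) \<in> J" by (rule ti_neg[OF J 1])
  then show "- f I - (- f J) \<in> J" by (simp add: algebra_simps)
qed

lemma compat_mult: "compat f \<Longrightarrow> compat g \<Longrightarrow> compat (\<lambda>I. f I * g I)"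
  unfolding compat_def
proof (intro allI impI)
  fix I J assume "\<forall>I J. I \<in> W B \<longrightarrow> J \<in> W B \<longrightarrow> I \<subseteq> J \<longrightarrow> f I - f J \<in> J"
    "\<forall>I J. I \<in> W B \<longrightarrow> J \<in> W B \<longrightarrow> I \<subseteq> J \<longrightarrow> g I - g J \<in> J"
    "I \<in> W B" "J \<in> W B" "I \<subseteq> J"
  then have 1: "f I - f J \<in> J" "g I - g J \<in> J" and J: "two_sided_ideal J" using WI by blast+
  have "(f I - f J) * g I + f J * (g I - g J) \<in> J"
    by (rule ti_add[OF J ti_rmult[OF J 1(1)] ti_lmult[OF J 1(2)]])
  then show "f I * g I - f J * g J \<in> J" by (simp add: algebra_simps)
qed

lemma carrierE:
  assumes "x \<in> carrier (completion B)"
  obtains f where "x = mk f" "compat f"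
  using assms carrier_iff by blast

lemma ring_R: "ring (completion B)"
proof (rule ringI)
  show "abelian_group (completion B)"
  proof (rule abelian_groupI)
    fix x y assume x: "x \<in> carrier (completion B)" and y: "y \<in> carrier (completion B)"
    obtain f where f: "x = mk f" "compat f" using carrierE[OF x] .
    obtain g where g: "y = mk g" "compat g" using carrierE[OF y] .
    show "x \<oplus>\<^bsub>completion B\<^esub> y \<in> carrier (completion B)"
      unfolding f g add_mk by (rule mk_in, rule compat_add[OF f(2) g(2)])
  next
    show "\<zero>\<^bsub>completion B\<^esub> \<in> carrier (completion B)"
      unfolding zero_mk by (rule mk_in, rule compat_const)
  next
    fix x y z assume x: "x \<in> carrier (completion B)" and y: "y \<in> carrier (completion B)" and z: "z \<in> carrier (completion B)"
    obtain f where f: "x = mk f" "compat f" using carrierE[OF x] .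
    obtain g where g: "y = mk g" "compat g" using carrierE[OF y] .
    obtain h where h: "z = mk h" "compat h" using carrierE[OF z] .
    show "x \<oplus>\<^bsub>completion B\<^esub> y \<oplus>\<^bsub>completion B\<^esub> z = x \<oplus>\<^bsub>completion B\<^esub> (y \<oplus>\<^bsub>completion B\<^esub> z)"
      unfolding f g h add_mk by (simp only: add.assoc)
  next
    fix x y assume x: "x \<in> carrier (completion B)" and y: "y \<in> carrier (completion B)"
    obtain f where f: "x = mk f" "compat f" using carrierE[OF x] .
    obtain g where g: "y = mk g" "compat g" using carrierE[OF y] .
    show "x \<oplus>\<^bsub>completion B\<^esub> y = y \<oplus>\<^bsub>completion B\<^esub> x"
      unfolding f g add_mk by (simp only: add.commute)
  next
    fix x assume x: "x \<in> carrier (completion B)"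
    obtain f where f: "x = mk f" "compat f" using carrierE[OF x] .
    show "\<zero>\<^bsub>completion B\<^esub> \<oplus>\<^bsub>completion B\<^esub> x = x"
      unfolding f zero_mk add_mk by simp
  next
    fix x assume x: "x \<in> carrier (completion B)"
    obtain f where f: "x = mk f" "compat f" using carrierE[OF x] .
    have "mk (\<lambda>I. - f I) \<oplus>\<^bsub>completion B\<^esub> x = \<zero>\<^bsub>completion B\<^esub>"
      unfolding f add_mk zero_mk by simp
    moreover have "mk (\<lambda>I. - f I) \<in> carrier (completion B)" using f compat_neg mk_in by blast
    ultimately show "\<exists>y\<in>carrier (completion B). y \<oplus>\<^bsub>completion B\<^esub> x = \<zero>\<^bsub>completion B\<^esub>" by blast
  qed
next
  show "monoid (completion B)"
  proof (rule monoidI)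
    fix x y assume x: "x \<in> carrier (completion B)" and y: "y \<in> carrier (completion B)"
    obtain f where f: "x = mk f" "compat f" using carrierE[OF x] .
    obtain g where g: "y = mk g" "compat g" using carrierE[OF y] .
    show "x \<otimes>\<^bsub>completion B\<^esub> y \<in> carrier (completion B)"
      unfolding f g mult_mk by (rule mk_in, rule compat_mult[OF f(2) g(2)])
  next
    show "\<one>\<^bsub>completion B\<^esub> \<in> carrier (completion B)"
      unfolding one_mk by (rule mk_in, rule compat_const)
  next
    fix x y z assume x: "x \<in> carrier (completion B)" and y: "y \<in> carrier (completion B)" and z: "z \<in> carrier (completion B)"
    obtain f where f: "x = mk f" "compat f" using carrierE[OF x] .
    obtain g where g: "y = mk g" "compat g" using carrierE[OF y] .
    obtain h where h: "z = mk h" "compat h" using carrierE[OF z] .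
    show "x \<otimes>\<^bsub>completion B\<^esub> y \<otimes>\<^bsub>completion B\<^esub> z = x \<otimes>\<^bsub>completion B\<^esub> (y \<otimes>\<^bsub>completion B\<^esub> z)"
      unfolding f g h mult_mk by (simp only: mult.assoc)
  next
    fix x assume x: "x \<in> carrier (completion B)"
    obtain f where f: "x = mk f" "compat f" using carrierE[OF x] .
    show "\<one>\<^bsub>completion B\<^esub> \<otimes>\<^bsub>completion B\<^esub> x = x"
      unfolding f one_mk mult_mk by simp
  next
    fix x assume x: "x \<in> carrier (completion B)"
    obtain f where f: "x = mk f" "compat f" using carrierE[OF x] .
    show "x \<otimes>\<^bsub>completion B\<^esub> \<one>\<^bsub>completion B\<^esub> = x"
      unfolding f one_mk mult_mk by simp
  qed
next
  fix x y z assume x: "x \<in> carrier (completion B)" and y: "y \<in> carrier (completion B)" and z: "z \<in> carrier (completion B)"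
  obtain f where f: "x = mk f" "compat f" using carrierE[OF x] .
  obtain g where g: "y = mk g" "compat g" using carrierE[OF y] .
  obtain h where h: "z = mk h" "compat h" using carrierE[OF z] .
  show "(x \<oplus>\<^bsub>completion B\<^esub> y) \<otimes>\<^bsub>completion B\<^esub> z = x \<otimes>\<^bsub>completion B\<^esub> z \<oplus>\<^bsub>completion B\<^esub> y \<otimes>\<^bsub>completion B\<^esub> z"
    unfolding f g h mult_mk add_mk by (simp only: distrib_right)
next
  fix x y z assume x: "x \<in> carrier (completion B)" and y: "y \<in> carrier (completion B)" and z: "z \<in> carrier (completion B)"
  obtain f where f: "x = mk f" "compat f" using carrierE[OF x] .
  obtain g where g: "y = mk g" "compat g" using carrierE[OF y] .
  obtain h where h: "z = mk h" "compat h" using carrierE[OF z] .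
  show "z \<otimes>\<^bsub>completion B\<^esub> (x \<oplus>\<^bsub>completion B\<^esub> y) = z \<otimes>\<^bsub>completion B\<^esub> x \<oplus>\<^bsub>completion B\<^esub> z \<otimes>\<^bsub>completion B\<^esub> y"
    unfolding f g h mult_mk add_mk by (simp only: distrib_left)
qed

end

context ring
begin

lemma left_idealI:
  assumes "L \<subseteq> carrier R" "\<zero> \<in> L" "\<And>x y. x \<in> L \<Longrightarrow> y \<in> L \<Longrightarrow> x \<oplus> y \<in> L"
    "\<And>a x. a \<in> carrier R \<Longrightarrow> x \<in> L \<Longrightarrow> a \<otimes> x \<in> L"
  shows "left_ideal R L"
  unfolding left_ideal_def
proof (intro conjI ballI assms)
  fix x assume x: "x \<in> L"
  then have xc: "x \<in> carrier R" using assms(1) by blast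
  have "\<ominus> \<one> \<otimes> x \<in> L" using assms(4) x by simp
  also have "\<ominus> \<one> \<otimes> x = \<ominus> x" using l_minus[of "\<one>" x] xc by simp
  finally show "\<ominus> x \<in> L" .
qed

lemma li_carrier: "left_ideal R L \<Longrightarrow> L \<subseteq> carrier R"
  unfolding left_ideal_def by blast

lemma li_zero: "left_ideal R L \<Longrightarrow> \<zero> \<in> L"
  unfolding left_ideal_def by blast

lemma li_add: "left_ideal R L \<Longrightarrow> x \<in> L \<Longrightarrow> y \<in> L \<Longrightarrow> x \<oplus> y \<in> L"
  unfolding left_ideal_def by blast

lemma li_mult: "left_ideal R L \<Longrightarrow> a \<in> carrier R \<Longrightarrow> x \<in> L \<Longrightarrow> a \<otimes> x \<in> L"
  unfolding left_ideal_def by blast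

lemma li_one: "left_ideal R L \<Longrightarrow> \<one> \<in> L \<Longrightarrow> L = carrier R"
proof
  assume L: "left_ideal R L" "\<one> \<in> L"
  show "L \<subseteq> carrier R" using li_carrier[OF L(1)] .
  show "carrier R \<subseteq> L"
  proof
    fix a assume a: "a \<in> carrier R"
    have "a \<otimes> \<one> \<in> L" using li_mult[OF L(1) a L(2)] .
    then show "a \<in> L" using a by simp
  qed
qed

lemma mli_one: "maximal_left_ideal R L \<Longrightarrow> \<one> \<notin> L"
  unfolding maximal_left_ideal_def using li_one by blast

lemma zorn_li:
  assumes I: "left_ideal R I" "\<one> \<notin> I"
  shows "\<exists>L. maximal_left_ideal R L \<and> I \<subseteq> L"
proof -
  define A where "A = {J. left_ideal R J \<and> I \<subseteq> J \<and> \<one> \<notin> J}"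
  have "\<exists>M\<in>A. \<forall>X\<in>A. M \<subseteq> X \<longrightarrow> X = M"
  proof (rule subset_Zorn_nonempty)
    show "A \<noteq> {}" using I unfolding A_def by blast
  next
    fix C assume C: "C \<noteq> {}" "subset.chain A C"
    then have CA: "C \<subseteq> A" and ch: "\<forall>X\<in>C. \<forall>Y\<in>C. X \<subseteq> Y \<or> Y \<subseteq> X"
      by (auto simp: subset_chain_def)
    obtain J0 where J0: "J0 \<in> C" using C by blast
    have li: "left_ideal R J" if "J \<in> C" for J using CA that unfolding A_def by blast
    have "left_ideal R (\<Union>C)"
    proof (rule left_idealI)
      show "\<Union>C \<subseteq> carrier R" using li li_carrier by blast
      show "\<zero> \<in> \<Union>C" using li_zero[OF li[OF J0]] J0 by blast
    next
      fix x y assume "x \<in> \<Union>C" "y \<in> \<Union>C"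
      then obtain X Y where XY: "X \<in> C" "Y \<in> C" "x \<in> X" "y \<in> Y" by blast
      show "x \<oplus> y \<in> \<Union>C"
      proof (cases "X \<subseteq> Y")
        case True
        then show ?thesis using li_add[OF li[OF XY(2)]] XY by blast
      next
        case False
        then have "Y \<subseteq> X" using ch XY by blast
        then show ?thesis using li_add[OF li[OF XY(1)]] XY by blast
      qed
    next
      fix a x assume "a \<in> carrier R" "x \<in> \<Union>C"
      then show "a \<otimes> x \<in> \<Union>C" using li li_mult by blast
    qed
    moreover have "I \<subseteq> \<Union>C" using CA J0 unfolding A_def by blast
    moreover have "\<one> \<notin> \<Union>C" using CA unfolding A_def by blast
    ultimately show "\<Union>C \<in> A" unfolding A_def by blast
  qed
  then obtain M where M: "M \<in> A" "\<forall>X\<in>A. M \<subseteq> X \<longrightarrow> X = M" by blast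
  have "maximal_left_ideal R M"
    unfolding maximal_left_ideal_def
  proof (intro conjI allI impI)
    show "left_ideal R M" using M unfolding A_def by blast
    show "M \<noteq> carrier R" using M unfolding A_def by auto
  next
    fix J assume J: "left_ideal R J \<and> M \<subseteq> J"
    show "J = M \<or> J = carrier R"
    proof (cases "\<one> \<in> J")
      case True then show ?thesis using li_one J by blast
    next
      case False
      then have "J \<in> A" using J M(1) unfolding A_def by blast
      then show ?thesis using M(2) J by blast
    qed
  qed
  then show ?thesis using M(1) unfolding A_def by blast
qed

lemma sum_li:
  assumes L: "left_ideal R L" and J: "left_ideal R J" and b: "b \<in> carrier R"
  shows "left_ideal R {l \<oplus> a \<otimes> b | l a. l \<in> L \<and> a \<in> J}"
proof (rule left_idealI)
  note Lc = li_carrier[OF L] and Jc = li_carrier[OF J]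
  show "{l \<oplus> a \<otimes> b | l a. l \<in> L \<and> a \<in> J} \<subseteq> carrier R" using Lc Jc b by blast
  have "\<zero> = \<zero> \<oplus> \<zero> \<otimes> b" using b by simp
  then show "\<zero> \<in> {l \<oplus> a \<otimes> b | l a. l \<in> L \<and> a \<in> J}" using li_zero[OF L] li_zero[OF J] by blast
next
  note Lc = li_carrier[OF L] and Jc = li_carrier[OF J]
  fix x y assume "x \<in> {l \<oplus> a \<otimes> b | l a. l \<in> L \<and> a \<in> J}" "y \<in> {l \<oplus> a \<otimes> b | l a. l \<in> L \<and> a \<in> J}"
  then obtain l1 a1 l2 a2 where h: "x = l1 \<oplus> a1 \<otimes> b" "l1 \<in> L" "a1 \<in> J" "y = l2 \<oplus> a2 \<otimes> b" "l2 \<in> L" "a2 \<in> J"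
    by blast
  have c: "l1 \<in> carrier R" "l2 \<in> carrier R" "a1 \<in> carrier R" "a2 \<in> carrier R" using h Lc Jc by auto
  have "x \<oplus> y = (l1 \<oplus> l2) \<oplus> (a1 \<oplus> a2) \<otimes> b"
    unfolding h using c b by (simp add: l_distr a_ac)
  moreover have "l1 \<oplus> l2 \<in> L" "a1 \<oplus> a2 \<in> J" using h li_add L J by auto
  ultimately show "x \<oplus> y \<in> {l \<oplus> a \<otimes> b | l a. l \<in> L \<and> a \<in> J}" by blast
next
  note Lc = li_carrier[OF L] and Jc = li_carrier[OF J]
  fix c x assume cc: "c \<in> carrier R" and "x \<in> {l \<oplus> a \<otimes> b | l a. l \<in> L \<and> a \<in> J}"
  then obtain l a where h: "x = l \<oplus> a \<otimes> b" "l \<in> L" "a \<in> J" by blast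
  have cr: "l \<in> carrier R" "a \<in> carrier R" using h Lc Jc by auto
  have "c \<otimes> x = c \<otimes> l \<oplus> (c \<otimes> a) \<otimes> b"
    unfolding h using cr b cc by (simp add: r_distr m_assoc)
  moreover have "c \<otimes> l \<in> L" "c \<otimes> a \<in> J" using h li_mult L J cc by auto
  ultimately show "c \<otimes> x \<in> {l \<oplus> a \<otimes> b | l a. l \<in> L \<and> a \<in> J}" by blast
qed

lemma carrier_li: "left_ideal R (carrier R)"
  by (rule left_idealI) auto

lemma colon_max:
  assumes L: "maximal_left_ideal R L" and b: "b \<in> carrier R" "b \<notin> L"
  shows "maximal_left_ideal R {y \<in> carrier R. y \<otimes> b \<in> L}"
proof -
  have Lli: "left_ideal R L" using L unfolding maximal_left_ideal_def by blast
  note Lc = li_carrier[OF Lli]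
  define Q where "Q = {y \<in> carrier R. y \<otimes> b \<in> L}"
  have Qli: "left_ideal R Q" unfolding Q_def
  proof (rule left_idealI)
    show "\<zero> \<in> {y \<in> carrier R. y \<otimes> b \<in> L}" using b li_zero[OF Lli] by simp
  next
    fix x y assume "x \<in> {y \<in> carrier R. y \<otimes> b \<in> L}" "y \<in> {y \<in> carrier R. y \<otimes> b \<in> L}"
    then show "x \<oplus> y \<in> {y \<in> carrier R. y \<otimes> b \<in> L}"
      using b li_add[OF Lli] by (simp add: l_distr)
  next
    fix a x assume "a \<in> carrier R" "x \<in> {y \<in> carrier R. y \<otimes> b \<in> L}"
    then show "a \<otimes> x \<in> {y \<in> carrier R. y \<otimes> b \<in> L}"
      using b li_mult[OF Lli] by (simp add: m_assoc)
  qed auto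
  have "\<one> \<notin> Q" using b unfolding Q_def by simp
  then have Qne: "Q \<noteq> carrier R" by auto
  have "J = Q \<or> J = carrier R" if J: "left_ideal R J" "Q \<subseteq> J" for J
  proof (cases "J = Q")
    case False
    then obtain j0 where j0: "j0 \<in> J" "j0 \<notin> Q" using J by blast
    have j0c: "j0 \<in> carrier R" using j0 li_carrier[OF J(1)] by blast
    define T where "T = {l \<oplus> a \<otimes> b | l a. l \<in> L \<and> a \<in> J}"
    have Tli: "left_ideal R T" unfolding T_def by (rule sum_li[OF Lli J(1) b(1)])
    have "L \<subseteq> T"
    proof
      fix l assume "l \<in> L"
      then have "l = l \<oplus> \<zero> \<otimes> b" "\<zero> \<in> J" using Lc b li_zero[OF J(1)] by auto
      then show "l \<in> T" unfolding T_def using \<open>l \<in> L\<close> by blast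
    qed
    moreover have "j0 \<otimes> b \<in> T"
    proof -
      have "j0 \<otimes> b = \<zero> \<oplus> j0 \<otimes> b" using j0c b by simp
      then show ?thesis unfolding T_def using li_zero[OF Lli] j0 by blast
    qed
    moreover have "j0 \<otimes> b \<notin> L" using j0 j0c unfolding Q_def by blast
    ultimately have "T \<noteq> L" by blast
    then have Tc: "T = carrier R" using L Tli \<open>L \<subseteq> T\<close> unfolding maximal_left_ideal_def by blast
    have "carrier R \<subseteq> J"
    proof
      fix y assume y: "y \<in> carrier R"
      then have "y \<otimes> b \<in> T" using b Tc by simp
      then obtain l a where h: "y \<otimes> b = l \<oplus> a \<otimes> b" "l \<in> L" "a \<in> J" unfolding T_def by blast
      have ac: "a \<in> carrier R" using h li_carrier[OF J(1)] by blast
      have lc: "l \<in> carrier R" using h Lc by blast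
      have "(y \<ominus> a) \<otimes> b = l"
      proof -
        have "(y \<ominus> a) \<otimes> b = y \<otimes> b \<ominus> a \<otimes> b" using y ac b by (simp add: minus_eq l_distr l_minus)
        also have "\<dots> = l" using h(1) lc ac b by (simp add: minus_eq a_assoc r_neg)
        finally show ?thesis .
      qed
      then have "y \<ominus> a \<in> Q" unfolding Q_def using h y ac by auto
      then have "y \<ominus> a \<in> J" using J by blast
      then have "(y \<ominus> a) \<oplus> a \<in> J" using li_add[OF J(1)] h by blast
      moreover have "(y \<ominus> a) \<oplus> a = y" using y ac by (simp add: minus_eq a_assoc l_neg)
      ultimately show "y \<in> J" by simp
    qed
    then show ?thesis using li_carrier[OF J(1)] by blast
  qed simp
  then show ?thesis unfolding maximal_left_ideal_def Q_def[symmetric] using Qli Qne by blast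
qed

lemma rad_carrier: "x \<in> jacobson_radical R \<Longrightarrow> x \<in> carrier R"
  unfolding jacobson_radical_def by blast

lemma radI: "x \<in> carrier R \<Longrightarrow> (\<And>L. maximal_left_ideal R L \<Longrightarrow> x \<in> L) \<Longrightarrow> x \<in> jacobson_radical R"
  unfolding jacobson_radical_def by blast

lemma radD: "x \<in> jacobson_radical R \<Longrightarrow> maximal_left_ideal R L \<Longrightarrow> x \<in> L"
  unfolding jacobson_radical_def by blast

lemma mli_li: "maximal_left_ideal R L \<Longrightarrow> left_ideal R L"
  unfolding maximal_left_ideal_def by blast

lemma rad_zero: "\<zero> \<in> jacobson_radical R"
  by (intro radI) (auto intro: li_zero mli_li)

lemma rad_add: "x \<in> jacobson_radical R \<Longrightarrow> y \<in> jacobson_radical R \<Longrightarrow> x \<oplus> y \<in> jacobson_radical R"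
  by (intro radI) (auto intro: li_add mli_li radD dest: rad_carrier)

lemma rad_lmult: "a \<in> carrier R \<Longrightarrow> x \<in> jacobson_radical R \<Longrightarrow> a \<otimes> x \<in> jacobson_radical R"
  by (intro radI) (auto intro: li_mult mli_li radD dest: rad_carrier)

lemma rad_rmult:
  assumes x: "x \<in> jacobson_radical R" and b: "b \<in> carrier R"
  shows "x \<otimes> b \<in> jacobson_radical R"
proof (rule radI)
  show "x \<otimes> b \<in> carrier R" using rad_carrier[OF x] b by simp
next
  fix L assume L: "maximal_left_ideal R L"
  show "x \<otimes> b \<in> L"
  proof (cases "b \<in> L")
    case True
    then show ?thesis using li_mult[OF mli_li[OF L] rad_carrier[OF x]] by blast
  next
    case False
    have "x \<in> {y \<in> carrier R. y \<otimes> b \<in> L}" using radD[OF x colon_max[OF L b False]] .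
    then show ?thesis by simp
  qed
qed

end

context compl
begin

lemma compat_diff: "compat f \<Longrightarrow> compat g \<Longrightarrow> compat (\<lambda>I. f I - g I)"
proof -
  assume "compat f" "compat g"
  then have "compat (\<lambda>I. f I + - g I)" by (intro compat_add compat_neg)
  then show ?thesis by (simp only: diff_conv_add_uminus)
qed

lemma mk_at: "I \<in> W B \<Longrightarrow> mk f I = coset_of I (f I)"
  by (simp add: mk_def)

lemma dir1:
  assumes c: "c \<in> carrier (completion B)" and ker: "\<forall>M\<in>B. c M = coset_of M 0"
  shows "c \<in> jacobson_radical (completion B)"
proof -
  interpret Rr: ring "completion B" by (rule ring_R)
  obtain f where f: "c = mk f" "compat f" using carrierE[OF c] .
  have fM: "f M \<in> M" if M: "M \<in> B" for M
  proof -
    have MW: "M \<in> W B" using W_single hB M by blast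
    have "c M = coset_of M (f M)" using f(1) mk_at[OF MW] by simp
    then have "coset_of M (f M) = coset_of M 0" using ker M by simp
    then show ?thesis using coset_eq_iff[OF WI[OF MW]] by simp
  qed
  show ?thesis
  proof (rule Rr.radI[OF c])
    fix L assume L: "maximal_left_ideal (completion B) L"
    note Lli = Rr.mli_li[OF L]
    show "c \<in> L"
    proof (rule ccontr)
      assume cL: "c \<notin> L"
      define T where "T = {l \<oplus>\<^bsub>completion B\<^esub> a \<otimes>\<^bsub>completion B\<^esub> c | l a. l \<in> L \<and> a \<in> carrier (completion B)}"
      have Tli: "left_ideal (completion B) T" unfolding T_def by (rule Rr.sum_li[OF Lli Rr.carrier_li c])
      have LT: "L \<subseteq> T"
      proof
        fix l assume l: "l \<in> L"
        then have "l = l \<oplus>\<^bsub>completion B\<^esub> \<zero>\<^bsub>completion B\<^esub> \<otimes>\<^bsub>completion B\<^esub> c"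
          using Rr.li_carrier[OF Lli] c by auto
        then show "l \<in> T" unfolding T_def using l by blast
      qed
      have "c = \<zero>\<^bsub>completion B\<^esub> \<oplus>\<^bsub>completion B\<^esub> \<one>\<^bsub>completion B\<^esub> \<otimes>\<^bsub>completion B\<^esub> c"
        using c by simp
      then have "c \<in> T" unfolding T_def using Rr.li_zero[OF Lli] by blast
      then have "T \<noteq> L" using cL by blast
      then have "T = carrier (completion B)" using L Tli LT unfolding maximal_left_ideal_def by blast
      then have "\<one>\<^bsub>completion B\<^esub> \<in> T" by simp
      then have "\<exists>l a. \<one>\<^bsub>completion B\<^esub> = l \<oplus>\<^bsub>completion B\<^esub> a \<otimes>\<^bsub>completion B\<^esub> c
        \<and> l \<in> L \<and> a \<in> carrier (completion B)" unfolding T_def by (simp only: mem_Collect_eq)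
      then obtain l a where la: "\<one>\<^bsub>completion B\<^esub> = l \<oplus>\<^bsub>completion B\<^esub> a \<otimes>\<^bsub>completion B\<^esub> c"
        "l \<in> L" "a \<in> carrier (completion B)" by blast
      have lc: "l \<in> carrier (completion B)" by (rule subsetD[OF Rr.li_carrier[OF Lli] la(2)])
      obtain h where h: "l = mk h" "compat h" using carrierE[OF lc] .
      obtain g' where g': "a = mk g'" "compat g'" using carrierE[OF la(3)] .
      define g where "g I = g' I * f I" for I
      have gc: "compat g" unfolding g_def by (rule compat_mult[OF g'(2) f(2)])
      have "\<one>\<^bsub>completion B\<^esub> = mk h \<oplus>\<^bsub>completion B\<^esub> mk g' \<otimes>\<^bsub>completion B\<^esub> mk f"
        using la(1) by (simp only: h(1) g'(1) f(1))
      then have "mk (\<lambda>_. 1) = mk (\<lambda>I. h I + g I)"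
        by (simp only: one_mk mult_mk add_mk g_def)
      then have hg0: "\<forall>I\<in>W B. 1 - (h I + g I) \<in> I" by (simp only: mk_eq_iff)
      have hg: "1 - (h I + g I) \<in> I" if "I \<in> W B" for I using hg0 that by blast
      have nil: "\<exists>N. g I ^ N \<in> I" if I: "I \<in> W B" for I
      proof -
        obtain ms where ms: "I = ideal_prod_list ms" "set ms \<subseteq> B" using I unfolding W_def by blast
        have ti: "\<forall>M\<in>set ms. two_sided_ideal M" using ms hB by blast
        have "\<forall>M\<in>set ms. g I \<in> M"
        proof
          fix M assume M: "M \<in> set ms"
          have MW: "M \<in> W B" using W_single hB M ms by blast
          have IM: "I \<subseteq> M" using prod_list_sub[OF ti M] ms by simp
          have tM: "two_sided_ideal M" using ti M by blast
          have "g I - g M \<in> M" using gc I MW IM unfolding compat_def by blast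
          moreover have "g M \<in> M" unfolding g_def using fM M ms ti_lmult[OF tM] by blast
          ultimately have "(g I - g M) + g M \<in> M" by (rule ti_add[OF tM])
          then show "g I \<in> M" by simp
        qed
        then show ?thesis using prod_list_power[OF ti] ms by blast
      qed
      define N where "N I = (SOME N. g I ^ N \<in> I)" for I
      have gN: "g I ^ N I \<in> I" if "I \<in> W B" for I unfolding N_def using someI_ex[OF nil[OF that]] .
      define s where "s I = (\<Sum>j<N I. g I ^ j)" for I
      have sr: "s I * (1 - g I) = 1 - (g I ^ N I)" for I unfolding s_def by (rule geom_r)
      have sl: "(1 - g I) * s I = 1 - (g I ^ N I)" for I unfolding s_def by (rule geom_l)
      have sc: "compat s" unfolding compat_def
      proof (intro allI impI)
        fix I J assume IJ: "I \<in> W B" "J \<in> W B" "I \<subseteq> J"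
        have tJ: "two_sided_ideal J" using WI IJ by blast
        have d: "g I - g J \<in> J" using gc IJ unfolding compat_def by blast
        have 1: "1 - (1 - g J) * s J \<in> J" using sl[of J] gN[OF IJ(2)] by simp
        have "- (g I ^ N I) + s I * (g I - g J) \<in> J"
          using gN[OF IJ(1)] IJ(3) d by (intro ti_add[OF tJ] ti_neg[OF tJ] ti_lmult[OF tJ]) auto
        moreover have "- (g I ^ N I) + s I * (g I - g J) = s I * (1 - g J) - 1"
        proof -
          have "s I * (1 - g J) - 1 = (s I * (1 - g I) - 1) + s I * (g I - g J)"
            by (simp add: algebra_simps)
          then show ?thesis using sr[of I] by simp
        qed
        ultimately have 2: "s I * (1 - g J) - 1 \<in> J" by simp
        have "s I * (1 - (1 - g J) * s J) + (s I * (1 - g J) - 1) * s J \<in> J"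
          by (intro ti_add[OF tJ] ti_lmult[OF tJ 1] ti_rmult[OF tJ 2])
        moreover have "s I * (1 - (1 - g J) * s J) + (s I * (1 - g J) - 1) * s J = s I - s J"
          by (simp add: algebra_simps)
        ultimately show "s I - s J \<in> J" by simp
      qed
      have uc: "mk s \<in> carrier (completion B)" by (rule mk_in[OF sc])
      have "mk s \<otimes>\<^bsub>completion B\<^esub> l = mk (\<lambda>_. 1)"
        unfolding h mult_mk mk_eq_iff
      proof
        fix I assume I: "I \<in> W B"
        have tI: "two_sided_ideal I" using WI I by blast
        have "s I * (h I + g I - 1) + (- (g I ^ N I)) \<in> I"
          using hg[OF I] gN[OF I] by (intro ti_add[OF tI] ti_neg[OF tI] ti_lmult[OF tI])
             (auto intro: ti_neg[OF tI, of "1 - (h I + g I)", simplified])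
        moreover have "s I * (h I + g I - 1) + (- (g I ^ N I)) = s I * h I - 1"
        proof -
          have "s I * (h I + g I - 1) + (- (g I ^ N I)) = s I * h I - s I * (1 - g I) - (g I ^ N I)"
            by (simp add: algebra_simps)
          then show ?thesis using sr[of I] by simp
        qed
        ultimately show "s I * h I - 1 \<in> I" by simp
      qed
      then have "\<one>\<^bsub>completion B\<^esub> = mk s \<otimes>\<^bsub>completion B\<^esub> l" using one_mk by simp
      then have "\<one>\<^bsub>completion B\<^esub> \<in> L" using Rr.li_mult[OF Lli uc la(2)] by simp
      then show False using Rr.mli_one[OF L] by blast
    qed
  qed
qed


lemma T_ti:
  fixes a :: 'a
  assumes tM: "two_sided_ideal M"
  shows "two_sided_ideal {z. \<exists>n (k::nat) x y. n \<in> M \<and> z = n + (\<Sum>i<k. x i * a * y i)}"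
    (is "two_sided_ideal ?T")
  unfolding two_sided_ideal_def
proof (intro conjI ballI allI)
  show "0 \<in> ?T" using ti_zero[OF tM] by (intro CollectI exI[of _ 0] exI[of _ "0::nat"]) simp
next
  fix z1 z2 assume "z1 \<in> ?T" "z2 \<in> ?T"
  then obtain n1 k1 x1 y1 n2 k2 x2 y2 where h: "n1 \<in> M" "z1 = n1 + (\<Sum>i<(k1::nat). x1 i * a * y1 i)"
    "n2 \<in> M" "z2 = n2 + (\<Sum>i<(k2::nat). x2 i * a * y2 i)" by blast
  define x where "x i = (if i < k1 then x1 i else x2 (i - k1))" for i
  define y where "y i = (if i < k1 then y1 i else y2 (i - k1))" for i
  have "z1 + z2 = (n1 + n2) + (\<Sum>i<k1+k2. x i * a * y i)"
    unfolding sum_concat h x_def y_def by (simp add: algebra_simps)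
  moreover have "n1 + n2 \<in> M" using h ti_add[OF tM] by blast
  ultimately show "z1 + z2 \<in> ?T"
    by (intro CollectI exI[of _ "n1 + n2"] exI[of _ "k1 + k2"] exI[of _ x] exI[of _ y]) simp
next
  fix z assume "z \<in> ?T"
  then obtain n k x y where h: "n \<in> M" "z = n + (\<Sum>i<(k::nat). x i * a * y i)" by blast
  have "- z = (- n) + (\<Sum>i<k. (- x i) * a * y i)" unfolding h by (simp add: sum_negf)
  moreover have "- n \<in> M" using h ti_neg[OF tM] by blast
  ultimately show "- z \<in> ?T"
    by (intro CollectI exI[of _ "- n"] exI[of _ k] exI[of _ "\<lambda>i. - x i"] exI[of _ y]) simp
next
  fix z b assume "z \<in> ?T"
  then obtain n k x y where h: "n \<in> M" "z = n + (\<Sum>i<(k::nat). x i * a * y i)" by blast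
  have "b * z = (b * n) + (\<Sum>i<k. (b * x i) * a * y i)"
    unfolding h by (simp add: sum_distrib_left distrib_left mult.assoc)
  moreover have "b * n \<in> M" using h ti_lmult[OF tM] by blast
  ultimately show "b * z \<in> ?T"
    by (intro CollectI exI[of _ "b * n"] exI[of _ k] exI[of _ "\<lambda>i. b * x i"] exI[of _ y]) simp
  have "z * b = (n * b) + (\<Sum>i<k. x i * a * (y i * b))"
    unfolding h by (simp add: sum_distrib_right distrib_right mult.assoc)
  moreover have "n * b \<in> M" using h ti_rmult[OF tM] by blast
  ultimately show "z * b \<in> ?T"
    by (intro CollectI exI[of _ "n * b"] exI[of _ k] exI[of _ x] exI[of _ "\<lambda>i. y i * b"]) simp
qed

lemma dir2:
  assumes c: "c \<in> jacobson_radical (completion B)" and M: "M \<in> B"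
    and Mmax: "maximal_two_sided_ideal M"
  shows "c M = coset_of M 0"
proof -
  interpret Rr: ring "completion B" by (rule ring_R)
  have cc: "c \<in> carrier (completion B)" by (rule Rr.rad_carrier[OF c])
  obtain f where f: "c = mk f" "compat f" using carrierE[OF cc] .
  have MW: "M \<in> W B" using W_single hB M by blast
  have tM: "two_sided_ideal M" using hB M by blast
  have MU: "M \<noteq> UNIV" using Mmax unfolding maximal_two_sided_ideal_def by blast
  have cM: "c M = coset_of M (f M)" using f(1) mk_at[OF MW] by simp
  have "f M \<in> M"
  proof (rule ccontr)
    assume fM: "f M \<notin> M"
    define T where "T = {z. \<exists>n (k::nat) x y. n \<in> M \<and> z = n + (\<Sum>i<k. x i * f M * y i)}"
    have Tti: "two_sided_ideal T" unfolding T_def by (rule T_ti[OF tM])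
    have MT: "M \<subseteq> T"
    proof
      fix m assume "m \<in> M"
      then show "m \<in> T" unfolding T_def by (intro CollectI exI[of _ m] exI[of _ "0::nat"]) simp
    qed
    have "f M \<in> T" unfolding T_def
      using ti_zero[OF tM]
      by (intro CollectI exI[of _ 0] exI[of _ "1::nat"] exI[of _ "\<lambda>_. 1"] exI[of _ "\<lambda>_. 1"]) simp
    then have "T \<noteq> M" using fM by blast
    then have "T = UNIV" using Mmax Tti MT unfolding maximal_two_sided_ideal_def by blast
    then have "1 \<in> T" by simp
    then obtain n k x y where nk: "n \<in> M" "1 = n + (\<Sum>i<(k::nat). x i * f M * y i)"
      unfolding T_def by blast
    have ind: "\<exists>z\<in>jacobson_radical (completion B). \<exists>h. z = mk h \<and> compat h \<and> h M = (\<Sum>i<j. x i * f M * y i)" for j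
    proof (induction j)
      case 0
      have "\<zero>\<^bsub>completion B\<^esub> = mk (\<lambda>_. 0) \<and> compat (\<lambda>_. 0) \<and> (\<lambda>_. 0) M = (\<Sum>i<0. x i * f M * y i)"
        using zero_mk compat_const by simp
      then show ?case using Rr.rad_zero by blast
    next
      case (Suc j)
      then obtain z h where z: "z \<in> jacobson_radical (completion B)" "z = mk h" "compat h"
        "h M = (\<Sum>i<j. x i * f M * y i)" by blast
      have xc: "mk (\<lambda>_. x j) \<in> carrier (completion B)" by (rule mk_in[OF compat_const])
      have yc: "mk (\<lambda>_. y j) \<in> carrier (completion B)" by (rule mk_in[OF compat_const])
      define z' where "z' = z \<oplus>\<^bsub>completion B\<^esub> (mk (\<lambda>_. x j) \<otimes>\<^bsub>completion B\<^esub> (c \<otimes>\<^bsub>completion B\<^esub> mk (\<lambda>_. y j)))"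
      have "z' \<in> jacobson_radical (completion B)" unfolding z'_def
        by (rule Rr.rad_add[OF z(1) Rr.rad_lmult[OF xc Rr.rad_rmult[OF c yc]]])
      moreover have "z' = mk (\<lambda>I. h I + x j * (f I * y j))" unfolding z'_def
        by (simp only: z(2) f(1) mult_mk add_mk)
      moreover have "compat (\<lambda>I. h I + x j * (f I * y j))"
        by (intro compat_add z(3) compat_mult compat_const f(2))
      moreover have "h M + x j * (f M * y j) = (\<Sum>i<Suc j. x i * f M * y i)"
        using z(4) by (simp add: mult.assoc)
      ultimately show ?case by blast
    qed
    obtain z h where z: "z \<in> jacobson_radical (completion B)" "z = mk h" "compat h"
        "h M = (\<Sum>i<k. x i * f M * y i)" using ind[of k] by blast
    have hM: "h M = 1 - n" using z(4) nk(2) by (simp add: eq_diff_eq add.commute)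
    define K where "K = {mk g | g. compat g \<and> g M \<in> M}"
    have Kli: "left_ideal (completion B) K"
    proof (rule Rr.left_idealI)
      show "K \<subseteq> carrier (completion B)" unfolding K_def using mk_in by blast
      show "\<zero>\<^bsub>completion B\<^esub> \<in> K" unfolding K_def zero_mk using compat_const ti_zero[OF tM] by blast
    next
      fix u v assume "u \<in> K" "v \<in> K"
      then obtain g1 g2 where g: "u = mk g1" "compat g1" "g1 M \<in> M" "v = mk g2" "compat g2" "g2 M \<in> M"
        unfolding K_def by blast
      have "u \<oplus>\<^bsub>completion B\<^esub> v = mk (\<lambda>I. g1 I + g2 I)" by (simp only: g add_mk)
      moreover have "compat (\<lambda>I. g1 I + g2 I)" by (rule compat_add[OF g(2) g(5)])
      moreover have "g1 M + g2 M \<in> M" by (rule ti_add[OF tM g(3) g(6)])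
      ultimately show "u \<oplus>\<^bsub>completion B\<^esub> v \<in> K" unfolding K_def by blast
    next
      fix a u assume a: "a \<in> carrier (completion B)" and "u \<in> K"
      then obtain g where g: "u = mk g" "compat g" "g M \<in> M" unfolding K_def by blast
      obtain g' where g': "a = mk g'" "compat g'" using carrierE[OF a] .
      have "a \<otimes>\<^bsub>completion B\<^esub> u = mk (\<lambda>I. g' I * g I)" by (simp only: g g' mult_mk)
      moreover have "compat (\<lambda>I. g' I * g I)" by (rule compat_mult[OF g'(2) g(2)])
      moreover have "g' M * g M \<in> M" by (rule ti_lmult[OF tM g(3)])
      ultimately show "a \<otimes>\<^bsub>completion B\<^esub> u \<in> K" unfolding K_def by blast
    qed
    have oneK: "\<one>\<^bsub>completion B\<^esub> \<notin> K"
    proof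
      assume "\<one>\<^bsub>completion B\<^esub> \<in> K"
      then obtain g where g: "\<one>\<^bsub>completion B\<^esub> = mk g" "g M \<in> M" unfolding K_def by blast
      then have "mk (\<lambda>_. 1) = mk g" using one_mk by simp
      then have "\<forall>I\<in>W B. 1 - g I \<in> I" by (simp only: mk_eq_iff)
      then have "1 - g M \<in> M" using MW by blast
      then have "(1 - g M) + g M \<in> M" by (rule ti_add[OF tM _ g(2)])
      then have "1 \<in> M" by simp
      then have "b * 1 \<in> M" for b by (rule ti_lmult[OF tM])
      then have "M = UNIV" by auto
      then show False using MU by blast
    qed
    obtain L where L: "maximal_left_ideal (completion B) L" "K \<subseteq> L"
      using Rr.zorn_li[OF Kli oneK] by blast
    have zL: "z \<in> L" by (rule Rr.radD[OF z(1) L(1)])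
    define e where "e = mk (\<lambda>I. 1 - h I)"
    have "compat (\<lambda>I. 1 - h I)" by (rule compat_diff[OF compat_const z(3)])
    moreover have "1 - h M \<in> M" using hM nk(1) by simp
    ultimately have "e \<in> K" unfolding K_def e_def by blast
    then have eL: "e \<in> L" using L(2) by blast
    have "e \<oplus>\<^bsub>completion B\<^esub> z = \<one>\<^bsub>completion B\<^esub>"
      unfolding e_def z(2) add_mk one_mk by simp
    then have "\<one>\<^bsub>completion B\<^esub> \<in> L" using Rr.li_add[OF Rr.mli_li[OF L(1)] eL zL] by simp
    then show False using Rr.mli_one[OF L(1)] by blast
  qed
  then show ?thesis using cM coset_eq_iff[OF tM] by simp
qed

end

theorem mainTheorem20:
  fixes scale :: "'k::field \<Rightarrow> 'a::ring_1 \<Rightarrow> 'a"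
    and r :: "('a set \<times> 'a set) set"
    and B :: "'a set set"
  assumes "k_algebra scale"
    and "equiv (cfs scale) r"
    and "B \<in> cfs scale // r"
  shows "jacobson_radical (completion B) =
           completion_carrier B \<inter> (\<Inter>M\<in>B. proj_kernel B M)"
proof -
  have Bsub: "B \<subseteq> cfs scale" using in_quotient_imp_subset assms(2,3) by blast
  have Bmax: "\<forall>M\<in>B. maximal_two_sided_ideal M" using Bsub unfolding cfs_def by blast
  have hB: "\<forall>M\<in>B. two_sided_ideal M" using Bmax unfolding maximal_two_sided_ideal_def by blast
  interpret compl B by unfold_locales (rule hB)
  interpret Rr: ring "completion B" by (rule ring_R)
  have carr: "carrier (completion B) = completion_carrier B" by (simp add: completion_def)
  show ?thesis
  proof (intro equalityI subsetI)
    fix c assume c: "c \<in> jacobson_radical (completion B)"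
    have cc: "c \<in> completion_carrier B" using Rr.rad_carrier[OF c] carr by simp
    have "c \<in> proj_kernel B M" if M: "M \<in> B" for M
      using dir2[OF c M] Bmax M cc unfolding proj_kernel_def proj_def by blast
    then show "c \<in> completion_carrier B \<inter> (\<Inter>M\<in>B. proj_kernel B M)" using cc by blast
  next
    fix c assume c: "c \<in> completion_carrier B \<inter> (\<Inter>M\<in>B. proj_kernel B M)"
    then have cc: "c \<in> carrier (completion B)" using carr by simp
    have "\<forall>M\<in>B. c M = coset_of M 0" using c unfolding proj_kernel_def proj_def by blast
    then show "c \<in> jacobson_radical (completion B)" by (rule dir1[OF cc])
  qed
qed

end
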